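(* Let $F \colon Q = I \times J \to \mathbb{W}$ be a horizontal $(M,\epsilon)$-quasi-isometric embedding, where $I,J \subset \mathbb{R}$ are intervals with $|I| > 2M^{2}\sqrt{|J|} + 4M\epsilon$. Then for each fixed $(y_{0},t_{0}) \in Q$, the maps $y \mapsto \pi_{1}(F(y,t_{0}))$ and $t \mapsto \pi_{2}(F(y_{0},t))$ are $(M,2\epsilon)$-quasi-isometric embeddings $(I,|\cdot|) \to (\mathbb{R},|\cdot|)$ and $(J,\|\cdot\|) \to (\mathbb{R},\|\cdot\|)$, respectively.
   Context: $\mathbb{W}$ is $\mathbb{R}^{2}$ with the metric $d_{\mathrm{par}}((y,t),(\xi,\tau)) = \max\{|y-\xi|,|t-\tau|^{1/2}\}$; $\pi_{1}(y,t) = y$, $\pi_{2}(y,t) = t$; horizontal lines in $\mathbb{W}$ are the sets $\mathbb{R} \times \{t\}$. $\|x-y\| := \sqrt{|x-y|}$ is the square root metric on $\mathbb{R}$. A map $F \colon (X,d) \to (Y,d')$ is an $(M,\epsilon)$-quasi-isometric embedding if $M^{-1}d(x,y) - \epsilon \leq d'(F(x),F(y)) \leq Md(x,y) + \epsilon$ for all $x,y$. For a rectangle $Q = I \times J$, $F \colon Q \to \mathbb{W}$ is a horizontal $(M,\epsilon)$-quasi-isometric embedding if it is an $(M,\epsilon)$-quasi-isometric embedding w.r.t. $d_{\mathrm{par}}$ and for every $t \in J$ there is a horizontal line $\ell_{t} \subset \mathbb{W}$ with $F(I \times \{t\}) \subset \ell_{t}$. *)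

theory Defs
  imports "HOL-Analysis.Analysis"
begin

text \<open>The parabolic metric on W = R^2.\<close>
definition d_par :: "real \<times> real \<Rightarrow> real \<times> real \<Rightarrow> real" where
  "d_par p q = max \<bar>fst p - fst q\<bar> (sqrt \<bar>snd p - snd q\<bar>)"

definition d_abs :: "real \<Rightarrow> real \<Rightarrow> real" where
  "d_abs x y = \<bar>x - y\<bar>"

definition d_sqrt :: "real \<Rightarrow> real \<Rightarrow> real" where
  "d_sqrt x y = sqrt \<bar>x - y\<bar>"

definition qi_embedding ::
  "('a \<Rightarrow> 'a \<Rightarrow> real) \<Rightarrow> ('b \<Rightarrow> 'b \<Rightarrow> real) \<Rightarrow> real \<Rightarrow> real \<Rightarrow> 'a set \<Rightarrow> ('a \<Rightarrow> 'b) \<Rightarrow> bool" where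
  "qi_embedding d d' M eps S F \<longleftrightarrow>
     (\<forall>x\<in>S. \<forall>y\<in>S. d x y / M - eps \<le> d' (F x) (F y) \<and> d' (F x) (F y) \<le> M * d x y + eps)"

definition horizontal_qi_embedding ::
  "real \<Rightarrow> real \<Rightarrow> real set \<Rightarrow> real set \<Rightarrow> (real \<times> real \<Rightarrow> real \<times> real) \<Rightarrow> bool" where
  "horizontal_qi_embedding M eps I J F \<longleftrightarrow>
     qi_embedding d_par d_par M eps (I \<times> J) F \<and>
     (\<forall>t\<in>J. \<exists>c. F ` (I \<times> {t}) \<subseteq> UNIV \<times> {c})"

definition interval_length :: "real set \<Rightarrow> ereal" where
  "interval_length I = Sup (ereal ` I) - Inf (ereal ` I)"

end

theory Submission
  imports Defs
begin

lemma len_ge: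
  assumes "a \<in> I" "b \<in> I" "interval_length I < \<infinity>"
  shows "\<bar>a - b\<bar> \<le> real_of_ereal (interval_length I)"
proof -
  have s1: "ereal a \<le> Sup (ereal ` I)" "ereal b \<le> Sup (ereal ` I)"
    using assms by (auto intro: Sup_upper)
  have i1: "Inf (ereal ` I) \<le> ereal a" "Inf (ereal ` I) \<le> ereal b"
    using assms by (auto intro: Inf_lower)
  obtain u where u: "Sup (ereal ` I) = ereal u \<or> Sup (ereal ` I) = \<infinity>"
    using s1 by (cases "Sup (ereal ` I)") auto
  obtain w where w: "Inf (ereal ` I) = ereal w \<or> Inf (ereal ` I) = -\<infinity>"
    using i1 by (cases "Inf (ereal ` I)") auto
  have fin: "Sup (ereal ` I) = ereal u \<and> Inf (ereal ` I) = ereal w"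
    using u w assms(3) unfolding interval_length_def by auto
  have "a \<le> u" "b \<le> u" "w \<le> a" "w \<le> b" using fin s1 i1 by auto
  moreover have "interval_length I = ereal (u - w)" using fin unfolding interval_length_def by simp
  ultimately show ?thesis by simp
qed

lemma len_exists:
  assumes "a0 \<in> I" "interval_length I > ereal K"
  shows "\<exists>a\<in>I. \<exists>b\<in>I. \<bar>a - b\<bar> > K"
proof (rule ccontr)
  assume "\<not> ?thesis"
  hence H: "\<And>a b. a \<in> I \<Longrightarrow> b \<in> I \<Longrightarrow> \<bar>a - b\<bar> \<le> K" by force
  have sup_le: "Sup (ereal ` I) \<le> ereal (a + K)" if "a \<in> I" for a
    by (rule Sup_least) (use H that in force)
  have s1: "ereal a0 \<le> Sup (ereal ` I)"
    using assms by (auto intro: Sup_upper)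
  obtain u where u: "Sup (ereal ` I) = ereal u"
    using s1 sup_le[OF assms(1)] by (cases "Sup (ereal ` I)") auto
  have uk: "u - K \<le> a" if "a \<in> I" for a using sup_le[OF that] u by simp
  have inf_ge: "ereal (u - K) \<le> Inf (ereal ` I)"
    by (rule Inf_greatest) (use uk in force)
  have i1: "Inf (ereal ` I) \<le> ereal a0"
    using assms by (auto intro: Inf_lower)
  obtain w where w: "Inf (ereal ` I) = ereal w"
    using i1 inf_ge by (cases "Inf (ereal ` I)") auto
  have "interval_length I = ereal (u - w)" unfolding interval_length_def u w by simp
  moreover have "u - w \<le> K" using inf_ge w by simp
  ultimately show False using assms(2) by simp
qed

lemma coarse_ivt:
  fixes f :: "real \<Rightarrow> real"
  assumes ab: "a \<le> b" and fa: "f a \<le> v" and fb: "v \<le> f b" and M: "M \<ge> 0"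
    and up: "\<And>x z. x \<in> {a..b} \<Longrightarrow> z \<in> {a..b} \<Longrightarrow> \<bar>f x - f z\<bar> \<le> M * \<bar>x - z\<bar> + eps"
  shows "\<exists>y\<in>{a..b}. \<bar>f y - v\<bar> \<le> eps"
proof -
  define S where "S = {y\<in>{a..b}. f y \<le> v}"
  have aS: "a \<in> S" using ab fa by (simp add: S_def)
  have bdd: "bdd_above S" unfolding S_def by (rule bdd_aboveI[of _ b]) auto
  define ys where "ys = Sup S"
  have ays: "a \<le> ys" unfolding ys_def using aS bdd by (rule cSup_upper)
  have ysb: "ys \<le> b" unfolding ys_def using aS by (intro cSup_least) (auto simp: S_def)
  have ysI: "ys \<in> {a..b}" using ays ysb by simp
  show ?thesis
  proof (cases "f ys \<le> v")
    case True
    show ?thesis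
    proof (cases "ys = b")
      case True
      have "0 \<le> eps" using up[of a a] ab by simp
      then show ?thesis using \<open>f ys \<le> v\<close> fb ysI True by (intro bexI[of _ ys]) auto
    next
      case False
      hence yb: "ys < b" using ysb by simp
      have "v - f ys \<le> eps"
      proof (rule ccontr)
        assume nt: "\<not> ?thesis"
        define d where "d = (v - f ys - eps) / (M + 1)"
        have dpos: "d > 0" using nt M by (simp add: d_def)
        have dM: "(M + 1) * d = v - f ys - eps" using M by (simp add: d_def)
        define z where "z = min b (ys + d)"
        have zgt: "z > ys" using dpos yb by (simp add: z_def)
        have zI: "z \<in> {a..b}" using zgt ays by (auto simp: z_def)
        have "z \<notin> S" using zgt bdd unfolding ys_def by (meson cSup_upper not_le)
        hence fz: "f z > v" using zI by (auto simp: S_def)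
        have "\<bar>f z - f ys\<bar> \<le> M * \<bar>z - ys\<bar> + eps" using up zI ysI by blast
        moreover have "M * \<bar>z - ys\<bar> \<le> M * d" using zgt M by (intro mult_left_mono) (auto simp: z_def)
        moreover have "M * d + d = v - f ys - eps" using dM by (simp add: distrib_right)
        ultimately show False using fz dpos abs_ge_self[of "f z - f ys"] by linarith
      qed
      then show ?thesis using True ysI by (intro bexI[of _ ys]) auto
    qed
  next
    case False
    have "f ys - v \<le> eps"
    proof (rule ccontr)
      assume nt: "\<not> ?thesis"
      define d where "d = (f ys - v - eps) / (M + 1)"
      have dpos: "d > 0" using nt M by (simp add: d_def)
      have dM: "(M + 1) * d = f ys - v - eps" using M by (simp add: d_def)
      have "ys - d < Sup S" using dpos by (simp add: ys_def)
      then obtain s where sS: "s \<in> S" and ss: "ys - d < s" using less_cSupD[of S] aS by blast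
      have sle: "s \<le> ys" using sS bdd unfolding ys_def by (rule cSup_upper)
      have sI: "s \<in> {a..b}" and fs: "f s \<le> v" using sS by (auto simp: S_def)
      have "\<bar>f ys - f s\<bar> \<le> M * \<bar>ys - s\<bar> + eps" using up sI ysI by blast
      moreover have "M * \<bar>ys - s\<bar> \<le> M * d" using ss sle M by (intro mult_left_mono) auto
      moreover have "M * d + d = f ys - v - eps" using dM by (simp add: distrib_right)
      ultimately show False using fs dpos False abs_ge_self[of "f ys - f s"] by linarith
    qed
    then show ?thesis using False ysI by (intro bexI[of _ ys]) auto
  qed
qed

lemma ivt_interval:
  fixes f :: "real \<Rightarrow> real"
  assumes I: "is_interval I" and M: "M \<ge> 0"
    and up: "\<And>x z. x \<in> I \<Longrightarrow> z \<in> I \<Longrightarrow> \<bar>f x - f z\<bar> \<le> M * \<bar>x - z\<bar> + eps"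
    and a: "a \<in> I" and b: "b \<in> I" and fa: "f a \<le> v" and fb: "v \<le> f b"
  shows "\<exists>y\<in>I. \<bar>f y - v\<bar> \<le> eps"
proof (cases "a \<le> b")
  case True
  have sub: "{a..b} \<subseteq> I"
  proof (rule subsetI)
    fix x assume "x \<in> {a..b}"
    hence "a \<le> x" "x \<le> b" by auto
    with is_interval_1[THEN iffD1, OF I] a b show "x \<in> I" by blast
  qed
  have up': "\<bar>f x - f z\<bar> \<le> M * \<bar>x - z\<bar> + eps" if "x \<in> {a..b}" "z \<in> {a..b}" for x z
    using that sub up by blast
  have "\<exists>y\<in>{a..b}. \<bar>f y - v\<bar> \<le> eps"
    by (rule coarse_ivt[OF True fa fb M up'])
  then show ?thesis using sub by blast
next
  case False
  have sub: "{b..a} \<subseteq> I"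
  proof (rule subsetI)
    fix x assume "x \<in> {b..a}"
    hence "b \<le> x" "x \<le> a" by auto
    with is_interval_1[THEN iffD1, OF I] a b show "x \<in> I" by blast
  qed
  have up': "\<bar>(- f x) - (- f z)\<bar> \<le> M * \<bar>x - z\<bar> + eps" if "x \<in> {b..a}" "z \<in> {b..a}" for x z
  proof -
    have "x \<in> I" "z \<in> I" using that sub by auto
    then have "\<bar>f x - f z\<bar> \<le> M * \<bar>x - z\<bar> + eps" by (rule up)
    then show ?thesis by (simp add: abs_minus_commute)
  qed
  have "\<exists>y\<in>{b..a}. \<bar>(- f y) - (- v)\<bar> \<le> eps"
  proof (rule coarse_ivt[of b a "\<lambda>x. - f x" "-v" M eps])
    show "b \<le> a" using False by simp
    show "- f b \<le> - v" using fb by simp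
    show "- v \<le> - f a" using fa by simp
    show "0 \<le> M" by (rule M)
  qed (rule up')
  then obtain y where "y \<in> {b..a}" "\<bar>f y - v\<bar> \<le> eps" by (auto simp: abs_minus_commute)
  then show ?thesis using sub by blast
qed

lemma comb:
  fixes f g :: "real \<Rightarrow> real"
  assumes ivf: "\<And>a b v. a \<in> I \<Longrightarrow> b \<in> I \<Longrightarrow> f a \<le> v \<Longrightarrow> v \<le> f b \<Longrightarrow> \<exists>y\<in>I. \<bar>f y - v\<bar> \<le> eps"
    and ivg: "\<And>a b v. a \<in> I \<Longrightarrow> b \<in> I \<Longrightarrow> g a \<le> v \<Longrightarrow> v \<le> g b \<Longrightarrow> \<exists>y\<in>I. \<bar>g y - v\<bar> \<le> eps"
    and close: "\<And>x. x \<in> I \<Longrightarrow> \<bar>f x - g x\<bar> \<le> D"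
    and p: "p \<in> I" and q: "q \<in> I" and fpq: "f q - f p > 2 * D"
  shows "\<exists>y\<in>I. \<exists>y'\<in>I. \<bar>f y - g y'\<bar> \<le> eps"
proof (cases "g p \<ge> f p")
  case True
  have "g p \<le> f q" using close[OF p] fpq close[OF q] by auto
  then obtain y where "y \<in> I" "\<bar>f y - g p\<bar> \<le> eps" using ivf[OF p q] True by blast
  then show ?thesis using p by blast
next
  case False
  have "g q \<ge> f p" using close[OF p] fpq close[OF q] by auto
  then obtain y where "y \<in> I" "\<bar>g y - f p\<bar> \<le> eps" using ivg[OF p q, of "f p"] False by auto
  then show ?thesis using p by (metis abs_minus_commute)
qed


lemma dpar_ge1: "\<bar>fst p - fst q\<bar> \<le> d_par p q" by (simp add: d_par_def)
lemma dpar_ge2: "sqrt \<bar>snd p - snd q\<bar> \<le> d_par p q" by (simp add: d_par_def)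
lemma dpar_snd: "snd p = snd q \<Longrightarrow> d_par p q = \<bar>fst p - fst q\<bar>" by (simp add: d_par_def)
lemma dpar_fst: "fst p = fst q \<Longrightarrow> d_par p q = sqrt \<bar>snd p - snd q\<bar>" by (simp add: d_par_def)

theorem lemma3p14:
  fixes M eps :: real and I J :: "real set" and F :: "real \<times> real \<Rightarrow> real \<times> real"
  assumes "M \<ge> 1" and "eps \<ge> 0"
    and "is_interval I" and "is_interval J"
    and "interval_length J < \<infinity>"
    and "interval_length I > ereal (2 * M^2 * sqrt (real_of_ereal (interval_length J)) + 4 * M * eps)"
    and "horizontal_qi_embedding M eps I J F"
    and "y0 \<in> I" and "t0 \<in> J"
  shows "qi_embedding d_abs d_abs M (2 * eps) I (\<lambda>y. fst (F (y, t0))) \<and>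
         qi_embedding d_sqrt d_sqrt M (2 * eps) J (\<lambda>t. snd (F (y0, t)))"
proof -
  note M1 = assms(1) and e0 = assms(2) and II = assms(3) and y0 = assms(8) and t0 = assms(9)
  have Mpos: "M > 0" using M1 by simp
  have qi: "\<And>p q. p \<in> I \<times> J \<Longrightarrow> q \<in> I \<times> J \<Longrightarrow>
      d_par p q / M - eps \<le> d_par (F p) (F q) \<and> d_par (F p) (F q) \<le> M * d_par p q + eps"
    using assms(7) unfolding horizontal_qi_embedding_def qi_embedding_def by blast
  have hs: "snd (F (y, t)) = snd (F (y', t))" if yy: "y \<in> I" "y' \<in> I" "t \<in> J" for y y' t
  proof -
    obtain c where c: "F ` (I \<times> {t}) \<subseteq> UNIV \<times> {c}"
      using assms(7) yy(3) unfolding horizontal_qi_embedding_def by blast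
    have "F (y, t) \<in> UNIV \<times> {c}" "F (y', t) \<in> UNIV \<times> {c}" using c yy by auto
    then have "snd (F (y, t)) = c" "snd (F (y', t)) = c" by (auto simp: mem_Times_iff)
    then show ?thesis by simp
  qed
  have P1: "qi_embedding d_abs d_abs M (2 * eps) I (\<lambda>y. fst (F (y, t0)))"
    unfolding qi_embedding_def d_abs_def
  proof (intro ballI conjI)
    fix y y' assume y: "y \<in> I" and y': "y' \<in> I"
    have e1: "d_par (F (y, t0)) (F (y', t0)) = \<bar>fst (F (y, t0)) - fst (F (y', t0))\<bar>"
      by (rule dpar_snd) (rule hs[OF y y' t0])
    have e2: "d_par (y, t0) (y', t0) = \<bar>y - y'\<bar>" by (simp add: dpar_snd)
    have "d_par (y, t0) (y', t0) / M - eps \<le> d_par (F (y, t0)) (F (y', t0)) \<and>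
          d_par (F (y, t0)) (F (y', t0)) \<le> M * d_par (y, t0) (y', t0) + eps"
      using qi y y' t0 by blast
    then show "\<bar>y - y'\<bar> / M - 2 * eps \<le> \<bar>fst (F (y, t0)) - fst (F (y', t0))\<bar>"
      "\<bar>fst (F (y, t0)) - fst (F (y', t0))\<bar> \<le> M * \<bar>y - y'\<bar> + 2 * eps"
      using e1 e2 e0 by auto
  qed
  define S where "S = sqrt (real_of_ereal (interval_length J))"
  have P2: "qi_embedding d_sqrt d_sqrt M (2 * eps) J (\<lambda>t. snd (F (y0, t)))"
    unfolding qi_embedding_def d_sqrt_def
  proof (intro ballI conjI)
    fix t t' assume t: "t \<in> J" and t': "t' \<in> J"
    define s where "s = sqrt \<bar>t - t'\<bar>"
    define q where "q = sqrt \<bar>snd (F (y0, t)) - snd (F (y0, t'))\<bar>"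
    have s0: "s \<ge> 0" and q0: "q \<ge> 0" by (auto simp: s_def q_def)
    have sS: "s \<le> S" unfolding s_def S_def using len_ge[OF t t' assms(5)] by simp
    have dy0: "d_par (y0, t) (y0, t') = s" by (simp add: dpar_fst s_def)
    have "d_par (F (y0, t)) (F (y0, t')) \<le> M * d_par (y0, t) (y0, t') + eps"
      using qi y0 t t' by blast
    moreover have "q \<le> d_par (F (y0, t)) (F (y0, t'))" unfolding q_def by (rule dpar_ge2)
    ultimately show "q \<le> M * s + 2 * eps" using dy0 e0 by simp
    show "s / M - 2 * eps \<le> q"
    proof (rule ccontr)
      assume "\<not> ?thesis"
      hence qs: "q < s / M - 2 * eps" by simp
      define f where "f y = fst (F (y, t))" for y
      define g where "g y = fst (F (y, t'))" for y
      define D where "D = M * s + eps"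
      have sep: "\<bar>f y - g y'\<bar> > eps" if y: "y \<in> I" and y': "y' \<in> I" for y y'
      proof -
        have "s \<le> d_par (y, t) (y', t')" unfolding s_def using dpar_ge2[of "(y, t)" "(y', t')"] by simp
        hence "s / M \<le> d_par (y, t) (y', t') / M" using Mpos by (simp add: divide_right_mono)
        moreover have "d_par (y, t) (y', t') / M - eps \<le> d_par (F (y, t)) (F (y', t'))"
          using qi y y' t t' by blast
        moreover have "d_par (F (y, t)) (F (y', t')) = max \<bar>f y - g y'\<bar> q"
          unfolding d_par_def f_def g_def q_def using hs[OF y y0 t] hs[OF y' y0 t'] by simp
        ultimately have "s / M - eps \<le> max \<bar>f y - g y'\<bar> q" by linarith
        then show ?thesis using qs q0 by (auto simp: max_def split: if_splits)
      qed
      have close: "\<bar>f y - g y\<bar> \<le> D" if y: "y \<in> I" for y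
      proof -
        have "\<bar>f y - g y\<bar> \<le> d_par (F (y, t)) (F (y, t'))" unfolding f_def g_def by (rule dpar_ge1)
        also have "\<dots> \<le> M * d_par (y, t) (y, t') + eps" using qi y t t' by blast
        also have "d_par (y, t) (y, t') = s" by (simp add: dpar_fst s_def)
        finally show ?thesis by (simp add: D_def)
      qed
      have upf: "\<bar>f x - f z\<bar> \<le> M * \<bar>x - z\<bar> + eps" if "x \<in> I" "z \<in> I" for x z
      proof -
        have "\<bar>f x - f z\<bar> \<le> d_par (F (x, t)) (F (z, t))" unfolding f_def by (rule dpar_ge1)
        also have "\<dots> \<le> M * d_par (x, t) (z, t) + eps" using qi that t by blast
        finally show ?thesis by (simp add: dpar_snd)
      qed
      have upg: "\<bar>g x - g z\<bar> \<le> M * \<bar>x - z\<bar> + eps" if "x \<in> I" "z \<in> I" for x z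
      proof -
        have "\<bar>g x - g z\<bar> \<le> d_par (F (x, t')) (F (z, t'))" unfolding g_def by (rule dpar_ge1)
        also have "\<dots> \<le> M * d_par (x, t') (z, t') + eps" using qi that t' by blast
        finally show ?thesis by (simp add: dpar_snd)
      qed
      have lowf: "\<bar>x - z\<bar> / M - eps \<le> \<bar>f x - f z\<bar>" if "x \<in> I" "z \<in> I" for x z
      proof -
        have "d_par (x, t) (z, t) / M - eps \<le> d_par (F (x, t)) (F (z, t))" using qi that t by blast
        moreover have "d_par (F (x, t)) (F (z, t)) = \<bar>f x - f z\<bar>"
          unfolding f_def by (rule dpar_snd) (rule hs[OF that t])
        ultimately show ?thesis by (simp add: dpar_snd)
      qed
      obtain a b where a: "a \<in> I" and b: "b \<in> I" and ab: "\<bar>a - b\<bar> > 2 * M^2 * S + 4 * M * eps"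
        using len_exists[OF y0 assms(6)] unfolding S_def by blast
      have "\<bar>a - b\<bar> / M > (2 * M^2 * S + 4 * M * eps) / M"
        using ab Mpos by (simp add: divide_strict_right_mono)
      also have "(2 * M^2 * S + 4 * M * eps) / M = 2 * M * S + 4 * eps"
        using Mpos by (simp add: field_simps power2_eq_square)
      finally have "\<bar>a - b\<bar> / M > 2 * M * S + 4 * eps" .
      moreover have "2 * (M * s + eps) \<le> 2 * M * S + 2 * eps"
        using mult_left_mono[OF sS, of M] Mpos by (simp add: algebra_simps)
      ultimately have big: "\<bar>f a - f b\<bar> > 2 * D" using lowf[OF a b] e0 unfolding D_def by linarith
      have ivf: "\<exists>y\<in>I. \<bar>f y - v\<bar> \<le> eps" if "p \<in> I" "p' \<in> I" "f p \<le> v" "v \<le> f p'" for p p' v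
        using ivt_interval[OF II _ upf that] Mpos by simp
      have ivg: "\<exists>y\<in>I. \<bar>g y - v\<bar> \<le> eps" if "p \<in> I" "p' \<in> I" "g p \<le> v" "v \<le> g p'" for p p' v
        using ivt_interval[OF II _ upg that] Mpos by simp
      have "\<exists>y\<in>I. \<exists>y'\<in>I. \<bar>f y - g y'\<bar> \<le> eps"
      proof (cases "f b - f a > 2 * D")
        case True
        show ?thesis by (rule comb[OF ivf ivg close a b True])
      next
        case False
        hence "f a - f b > 2 * D" using big by linarith
        show ?thesis by (rule comb[OF ivf ivg close b a \<open>f a - f b > 2 * D\<close>])
      qed
      then show False using sep by force
    qed
  qed
  show ?thesis using P1 P2 by blast
qed

end
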